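(* Let $(\Sigma,\mathscr{P})$ be a Kelvin-Planck theory and let $\sigma,\sigma'\in\Sigma$. The following are equivalent: (i) $\sigma$ and $\sigma'$ are of the same hotness, i.e. both $(0,\delta_\sigma-\delta_{\sigma'})$ and $(0,\delta_{\sigma'}-\delta_\sigma)$ belong to $\hat{\mathscr{P}}$; (ii) $T(\sigma)=T(\sigma')$ for every Clausius-Duhem temperature scale $T$ of $(\Sigma,\mathscr{P})$.
   Context: $\Sigma$ is a compact Hausdorff space. $\mathscr{M}(\Sigma)$ is the vector space of regular signed Borel measures on $\Sigma$ with its weak-star topology (as dual of $C(\Sigma,\mathbb{R})$); $\mathscr{M}_+(\Sigma)$ is the set of nonnegative members; $\mathscr{M}^\circ(\Sigma)=\{\mu\in\mathscr{M}(\Sigma):\mu(\Sigma)=0\}$; $\mathscr{V}(\Sigma)=\mathscr{M}^\circ(\Sigma)\oplus\mathscr{M}(\Sigma)$ with the product topology. For $\mathscr{P}\subset\mathscr{V}(\Sigma)$, $\mathrm{Cone}(\mathscr{P})$ is the set of all nonnegative multiples of members of $\mathscr{P}$ and $\hat{\mathscr{P}}:=\mathrm{cl}(\mathrm{Cone}(\mathscr{P}))$. A thermodynamical theory is a pair $(\Sigma,\mathscr{P})$ with $\mathscr{P}\subset\mathscr{V}(\Sigma)$ and $\hat{\mathscr{P}}$ convex. It is a Kelvin-Planck theory if $\hat{\mathscr{P}}\cap\{(0,\nu):\nu\in\mathscr{M}_+(\Sigma)\}=\{(0,0)\}$. A Clausius-Duhem pair is $(\eta,T)$ with $\eta\in C(\Sigma,\mathbb{R})$,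 $T\in C(\Sigma,(0,\infty))$ such that $\int_\Sigma\eta\,d(\Delta\mathscr{m})\ge\int_\Sigma \frac{d\mathscr{q}}{T}$ for all $(\Delta\mathscr{m},\mathscr{q})\in\mathscr{P}$; $T$ is a Clausius-Duhem temperature scale if some such $\eta$ exists. $\delta_\sigma$ is the Dirac measure at $\sigma$. *)

theory Defs
  imports "HOL-Analysis.Analysis"
begin

text \<open>
  The state space \<Sigma> is the universe of a type 'a (Hausdorff topology, assumed compact).
  By the Riesz representation theorem, regular signed Borel measures on \<Sigma> are identified
  with bounded linear functionals on C(\<Sigma>,R); the weak-star topology is then the topology of
  pointwise convergence on C(\<Sigma>,R).  A functional is represented as a map
  ('a \<Rightarrow> real) \<Rightarrow> real which is extensional (zero on non-continuous functions), so that
  the product topology on the function type restricted to such functionals is exactly the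
  weak-star topology.  The integral of a continuous f against \<mu> is \<mu> f.
\<close>

type_synonym 'a msr = "('a \<Rightarrow> real) \<Rightarrow> real"

definition Cfun :: "('a::topological_space \<Rightarrow> real) set" where
  "Cfun = {f. continuous_on UNIV f}"

definition sup_norm :: "('a::topological_space \<Rightarrow> real) \<Rightarrow> real" where
  "sup_norm f = (SUP x. \<bar>f x\<bar>)"

definition Msr :: "('a::topological_space) msr set" where
  "Msr = {\<mu>. (\<forall>f. f \<notin> Cfun \<longrightarrow> \<mu> f = 0)
           \<and> (\<forall>f\<in>Cfun. \<forall>g\<in>Cfun. \<mu> (\<lambda>x. f x + g x) = \<mu> f + \<mu> g)
           \<and> (\<forall>f\<in>Cfun. \<forall>c. \<mu> (\<lambda>x. c * f x) = c * \<mu> f)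
           \<and> (\<exists>K. \<forall>f\<in>Cfun. \<bar>\<mu> f\<bar> \<le> K * sup_norm f)}"

definition Msr_pos :: "('a::topological_space) msr set" where
  "Msr_pos = {\<nu>\<in>Msr. \<forall>f\<in>Cfun. (\<forall>x. 0 \<le> f x) \<longrightarrow> 0 \<le> \<nu> f}"

definition Msr0 :: "('a::topological_space) msr set" where
  "Msr0 = {\<mu>\<in>Msr. \<mu> (\<lambda>_. 1) = 0}"

definition Vsp :: "('a::topological_space msr \<times> 'a msr) set" where
  "Vsp = Msr0 \<times> Msr"

definition dirac :: "'a::topological_space \<Rightarrow> 'a msr" where
  "dirac s = (\<lambda>f. if f \<in> Cfun then f s else 0)"

definition msr_zero :: "'a msr" where
  "msr_zero = (\<lambda>f. 0)"

definition msr_scale :: "real \<Rightarrow> ('a msr \<times> 'a msr) \<Rightarrow> ('a msr \<times> 'a msr)" where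
  "msr_scale c p = ((\<lambda>f. c * fst p f), (\<lambda>f. c * snd p f))"

definition msr_add :: "('a msr \<times> 'a msr) \<Rightarrow> ('a msr \<times> 'a msr) \<Rightarrow> ('a msr \<times> 'a msr)" where
  "msr_add p q = ((\<lambda>f. fst p f + fst q f), (\<lambda>f. snd p f + snd q f))"

definition Cone :: "('a msr \<times> 'a msr) set \<Rightarrow> ('a msr \<times> 'a msr) set" where
  "Cone P = {msr_scale c p | c p. 0 \<le> c \<and> p \<in> P}"

definition hatP :: "('a::topological_space msr \<times> 'a msr) set \<Rightarrow> ('a msr \<times> 'a msr) set" where
  "hatP P = closure (Cone P) \<inter> Vsp"

definition msr_convex :: "('a msr \<times> 'a msr) set \<Rightarrow> bool" where
  "msr_convex S \<longleftrightarrow> (\<forall>p\<in>S. \<forall>q\<in>S. \<forall>t::real. 0 \<le> t \<and> t \<le> 1 \<longrightarrow>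
      msr_add (msr_scale t p) (msr_scale (1 - t) q) \<in> S)"

definition thermo_theory :: "('a::topological_space msr \<times> 'a msr) set \<Rightarrow> bool" where
  "thermo_theory P \<longleftrightarrow> P \<subseteq> Vsp \<and> msr_convex (hatP P)"

definition kelvin_planck :: "('a::topological_space msr \<times> 'a msr) set \<Rightarrow> bool" where
  "kelvin_planck P \<longleftrightarrow> thermo_theory P \<and>
     hatP P \<inter> {(msr_zero, \<nu>) | \<nu>. \<nu> \<in> Msr_pos} = {(msr_zero, msr_zero)}"

definition CD_pair :: "('a::topological_space msr \<times> 'a msr) set \<Rightarrow> ('a \<Rightarrow> real) \<Rightarrow> ('a \<Rightarrow> real) \<Rightarrow> bool" where
  "CD_pair P \<eta> T \<longleftrightarrow> \<eta> \<in> Cfun \<and> T \<in> Cfun \<and> (\<forall>x. 0 < T x) \<and>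
     (\<forall>(dm, q)\<in>P. dm \<eta> \<ge> q (\<lambda>x. 1 / T x))"

definition CD_temp_scale :: "('a::topological_space msr \<times> 'a msr) set \<Rightarrow> ('a \<Rightarrow> real) \<Rightarrow> bool" where
  "CD_temp_scale P T \<longleftrightarrow> (\<exists>\<eta>. CD_pair P \<eta> T)"

definition same_hotness :: "('a::topological_space msr \<times> 'a msr) set \<Rightarrow> 'a \<Rightarrow> 'a \<Rightarrow> bool" where
  "same_hotness P s s' \<longleftrightarrow>
     (msr_zero, (\<lambda>f. dirac s f - dirac s' f)) \<in> hatP P \<and>
     (msr_zero, (\<lambda>f. dirac s' f - dirac s f)) \<in> hatP P"

end

theory Submission
  imports Defs
begin


lemma sup_norm_ge:
  assumes "compact (UNIV :: 'a::topological_space set)" "f \<in> Cfun"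
  shows "\<bar>(f::'a\<Rightarrow>real) x\<bar> \<le> sup_norm f"
proof -
  have "compact (range f)" using assms compact_continuous_image unfolding Cfun_def by blast
  then have "bounded (range f)" by (rule compact_imp_bounded)
  then obtain B where B: "\<And>y. \<bar>f y\<bar> \<le> B" unfolding bounded_iff by auto
  have "bdd_above (range (\<lambda>y. \<bar>f y\<bar>))" by (rule bdd_aboveI[where M=B]) (auto simp: B)
  then show ?thesis unfolding sup_norm_def using cSUP_upper[of x UNIV "\<lambda>y. \<bar>f y\<bar>"] by simp
qed

lemma Cfun_const[simp]: "(\<lambda>_. c) \<in> Cfun" by (simp add: Cfun_def)
lemma Cfun_add: "f \<in> Cfun \<Longrightarrow> g \<in> Cfun \<Longrightarrow> (\<lambda>x. f x + g x) \<in> Cfun"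
  by (simp add: Cfun_def continuous_on_add)
lemma Cfun_mult: "f \<in> Cfun \<Longrightarrow> (\<lambda>x. c * f x) \<in> Cfun"
  by (simp add: Cfun_def continuous_on_mult continuous_on_const)
lemma Cfun_sum: "finite G \<Longrightarrow> (\<And>i. i \<in> G \<Longrightarrow> g i \<in> Cfun) \<Longrightarrow> (\<lambda>x. \<Sum>i\<in>G. c i * g i x) \<in> Cfun"
  unfolding Cfun_def by (auto intro!: continuous_intros)
lemma Cfun_inv: "f \<in> Cfun \<Longrightarrow> (\<forall>x. 0 < f x) \<Longrightarrow> (\<lambda>x. 1 / f x) \<in> Cfun"
  unfolding Cfun_def by (auto intro!: continuous_intros) (metis less_irrefl)

lemma Msr_add: "\<mu> \<in> Msr \<Longrightarrow> f \<in> Cfun \<Longrightarrow> g \<in> Cfun \<Longrightarrow> \<mu> (\<lambda>x. f x + g x) = \<mu> f + \<mu> g"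
  unfolding Msr_def by blast
lemma Msr_mult: "\<mu> \<in> Msr \<Longrightarrow> f \<in> Cfun \<Longrightarrow> \<mu> (\<lambda>x. c * f x) = c * \<mu> f"
  unfolding Msr_def by blast
lemma Msr_nc: "\<mu> \<in> Msr \<Longrightarrow> f \<notin> Cfun \<Longrightarrow> \<mu> f = 0"
  unfolding Msr_def by blast

lemma Msr_sum:
  assumes "\<mu> \<in> Msr" "finite G" "\<And>i. i \<in> G \<Longrightarrow> g i \<in> Cfun"
  shows "\<mu> (\<lambda>x. \<Sum>i\<in>G. c i * g i x) = (\<Sum>i\<in>G. c i * \<mu> (g i))"
  using assms(2,3)
proof (induction G rule: finite_induct)
  case empty
  have "\<mu> (\<lambda>x. 0 * 0) = 0 * \<mu> (\<lambda>x. 0)" by (rule Msr_mult[OF assms(1)]) simp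
  then show ?case by simp
next
  case (insert a G)
  have "\<mu> (\<lambda>x. \<Sum>i\<in>insert a G. c i * g i x) = \<mu> (\<lambda>x. c a * g a x + (\<Sum>i\<in>G. c i * g i x))"
    using insert by simp
  also have "\<dots> = \<mu> (\<lambda>x. c a * g a x) + \<mu> (\<lambda>x. \<Sum>i\<in>G. c i * g i x)"
    by (rule Msr_add[OF assms(1)]) (use insert in \<open>auto intro: Cfun_mult Cfun_sum\<close>)
  also have "\<dots> = c a * \<mu> (g a) + (\<Sum>i\<in>G. c i * \<mu> (g i))"
    using insert Msr_mult[OF assms(1)] by simp
  finally show ?case using insert by simp
qed

lemma Msr_scale: "(\<mu>::'a::topological_space msr) \<in> Msr \<Longrightarrow> (\<lambda>f. c * \<mu> f) \<in> Msr"
proof -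
  assume m: "\<mu> \<in> Msr"
  then obtain K where K: "\<forall>f\<in>Cfun. \<bar>\<mu> f\<bar> \<le> K * sup_norm f" unfolding Msr_def by blast
  have "\<forall>f\<in>Cfun. \<bar>c * \<mu> f\<bar> \<le> (\<bar>c\<bar> * K) * sup_norm f"
  proof
    fix f :: "'a \<Rightarrow> real" assume "f \<in> Cfun"
    then have "\<bar>\<mu> f\<bar> \<le> K * sup_norm f" using K by blast
    then have "\<bar>c\<bar> * \<bar>\<mu> f\<bar> \<le> \<bar>c\<bar> * (K * sup_norm f)" by (simp add: mult_left_mono)
    then show "\<bar>c * \<mu> f\<bar> \<le> (\<bar>c\<bar> * K) * sup_norm f" by (simp add: abs_mult mult.assoc)
  qed
  then have b: "\<exists>K'. \<forall>f\<in>Cfun. \<bar>c * \<mu> f\<bar> \<le> K' * sup_norm f" by blast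
  have "(\<forall>f. f \<notin> Cfun \<longrightarrow> c * \<mu> f = 0) \<and> (\<forall>f\<in>Cfun. \<forall>g\<in>Cfun. c * \<mu> (\<lambda>x. f x + g x) = c * \<mu> f + c * \<mu> g)
     \<and> (\<forall>f\<in>Cfun. \<forall>c'. c * \<mu> (\<lambda>x. c' * f x) = c' * (c * \<mu> f))"
    using m unfolding Msr_def by (auto simp: algebra_simps)
  with b show ?thesis unfolding Msr_def by blast
qed

lemma Msr0_scale: "\<mu> \<in> Msr0 \<Longrightarrow> (\<lambda>f. c * \<mu> f) \<in> Msr0"
  unfolding Msr0_def using Msr_scale by auto

lemma Vsp_scale: "p \<in> Vsp \<Longrightarrow> msr_scale c p \<in> Vsp"
  unfolding Vsp_def msr_scale_def using Msr_scale Msr0_scale by (cases p) auto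

lemma zero_Msr0: "msr_zero \<in> Msr0"
  unfolding Msr0_def Msr_def msr_zero_def by (auto intro: exI[of _ 0])

lemma diff_dirac_Msr:
  assumes "compact (UNIV :: 'a::topological_space set)"
  shows "(\<lambda>f. dirac (s::'a) f - dirac s' f) \<in> Msr"
proof -
  have "\<forall>f\<in>Cfun. \<bar>f s - f s'\<bar> \<le> 2 * sup_norm f"
  proof
    fix f :: "'a \<Rightarrow> real" assume "f \<in> Cfun"
    then have "\<bar>f s\<bar> \<le> sup_norm f" "\<bar>f s'\<bar> \<le> sup_norm f" using sup_norm_ge[OF assms] by auto
    then show "\<bar>f s - f s'\<bar> \<le> 2 * sup_norm f" by linarith
  qed
  then show ?thesis unfolding Msr_def dirac_def
    by (auto intro!: exI[of _ 2] simp: Cfun_add Cfun_mult algebra_simps)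
qed

lemma ConeP_Vsp: "P \<subseteq> Vsp \<Longrightarrow> Cone P \<subseteq> Vsp"
  unfolding Cone_def using Vsp_scale by blast

lemma ConeP_hatP: "P \<subseteq> Vsp \<Longrightarrow> Cone P \<subseteq> hatP P"
  unfolding hatP_def using ConeP_Vsp closure_subset by blast

lemma scale_in_Cone: "p \<in> P \<Longrightarrow> 0 \<le> c \<Longrightarrow> msr_scale c p \<in> Cone P"
  unfolding Cone_def by blast

lemma scale_one: "msr_scale 1 p = p"
  unfolding msr_scale_def by (cases p) auto



lemma CL:
  fixes S :: "('i \<Rightarrow> real) set" and F :: "'i set"
  assumes fin: "finite F" and ne: "S \<noteq> {}"
    and cvx: "\<And>x y t. x \<in> S \<Longrightarrow> y \<in> S \<Longrightarrow> 0 \<le> t \<Longrightarrow> t \<le> 1 \<Longrightarrow> (\<lambda>i. t * x i + (1 - t) * y i) \<in> S"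
    and epos: "0 < e" and gap: "\<And>y. y \<in> S \<Longrightarrow> e \<le> (\<Sum>i\<in>F. (y i)^2)"
  shows "\<exists>w. \<forall>y\<in>S. 0 < (\<Sum>i\<in>F. w i * y i)"
proof -
  define N where "N y = (\<Sum>i\<in>F. (y i)^2)" for y :: "'i \<Rightarrow> real"
  define d where "d = Inf (N ` S)"
  have bdd: "bdd_below (N ` S)" unfolding N_def by (rule bdd_belowI[where m=0]) (auto intro: sum_nonneg)
  have dlow: "d \<le> N y" if "y \<in> S" for y unfolding d_def using bdd that by (auto intro: cInf_lower)
  have de: "e \<le> d" unfolding d_def using ne gap by (auto intro!: cInf_greatest simp: N_def)
  have "\<exists>y\<in>S. N y < d + 1 / real (Suc k)" for k
  proof -
    have "Inf (N ` S) < d + 1 / real (Suc k)" unfolding d_def by simp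
    then show ?thesis using cInf_lessD[of "N ` S"] ne by auto
  qed
  then obtain Y where YS: "\<And>k. Y k \<in> S" and YN: "\<And>k. N (Y k) < d + 1 / real (Suc k)"
    by metis
  have par: "(\<Sum>i\<in>F. (a i - b i)^2) \<le> 2 * N a + 2 * N b - 4 * d" if "a \<in> S" "b \<in> S" for a b
  proof -
    define m where "m = (\<lambda>i. (1/2) * a i + (1 - 1/2) * b i)"
    have "m \<in> S" unfolding m_def by (rule cvx) (use that in auto)
    then have dm: "d \<le> N m" by (rule dlow)
    have "(\<Sum>i\<in>F. (a i - b i)^2) = (\<Sum>i\<in>F. 2*(a i)^2 + 2*(b i)^2 - 4*(m i)^2)"
      by (rule sum.cong) (simp_all add: m_def power2_eq_square algebra_simps)
    also have "\<dots> = 2 * N a + 2 * N b - 4 * N m"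
      by (simp add: N_def sum.distrib sum_subtractf sum_distrib_left)
    finally show ?thesis using dm by linarith
  qed
  have coord: "(Y k i - Y l i)^2 \<le> 2 / real (Suc k) + 2 / real (Suc l)" if "i \<in> F" for i k l
  proof -
    have "(Y k i - Y l i)^2 \<le> (\<Sum>j\<in>F. (Y k j - Y l j)^2)"
      using fin that by (intro member_le_sum) auto
    also have "\<dots> \<le> 2 * N (Y k) + 2 * N (Y l) - 4 * d" using par YS by blast
    also have "\<dots> \<le> 2 / real (Suc k) + 2 / real (Suc l)" using YN[of k] YN[of l] by simp
    finally show ?thesis .
  qed
  have cau: "Cauchy (\<lambda>k. Y k i)" if "i \<in> F" for i
  proof (rule metric_CauchyI)
    fix r :: real assume r: "0 < r"
    obtain M where M: "inverse (real (Suc M)) < r^2 / 4" using reals_Archimedean[of "r^2/4"] r by auto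
    show "\<exists>M. \<forall>m\<ge>M. \<forall>n\<ge>M. dist (Y m i) (Y n i) < r"
    proof (intro exI allI impI)
      fix m n assume mn: "M \<le> m" "M \<le> n"
      have "inverse (real (Suc m)) \<le> inverse (real (Suc M))" "inverse (real (Suc n)) \<le> inverse (real (Suc M))"
        using mn by (auto intro!: le_imp_inverse_le)
      moreover have "2 / real (Suc m) + 2 / real (Suc n) = 2 * inverse (real (Suc m)) + 2 * inverse (real (Suc n))"
        by (simp add: divide_inverse)
      ultimately have "2 / real (Suc m) + 2 / real (Suc n) < r^2" using M by linarith
      then have "(Y m i - Y n i)^2 < r^2" using coord[OF that, of m n] by linarith
      then have "\<bar>Y m i - Y n i\<bar>^2 < r^2" by simp
      then have "\<bar>Y m i - Y n i\<bar> < r" using r power_less_imp_less_base[of "\<bar>Y m i - Y n i\<bar>" 2 r] by simp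
      then show "dist (Y m i) (Y n i) < r" by (simp add: dist_real_def)
    qed
  qed
  define p where "p i = lim (\<lambda>k. Y k i)" for i
  have Yp: "(\<lambda>k. Y k i) \<longlonglongrightarrow> p i" if "i \<in> F" for i
    using cau[OF that] unfolding p_def by (simp add: Cauchy_convergent_iff convergent_LIMSEQ_iff)
  have NYp: "(\<lambda>k. N (Y k)) \<longlonglongrightarrow> N p"
    unfolding N_def by (intro tendsto_sum tendsto_power Yp)
  have Np1: "d \<le> N p" using NYp by (rule LIMSEQ_le_const) (use dlow YS in auto)
  have Np2: "N p \<le> d"
  proof (rule field_le_epsilon)
    fix r :: real assume r: "0 < r"
    obtain M where M: "inverse (real (Suc M)) < r" using reals_Archimedean[OF r] by auto
    show "N p \<le> d + r"
    proof (rule LIMSEQ_le_const2[OF NYp], intro exI allI impI)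
      fix n assume "M \<le> n"
      then have "inverse (real (Suc n)) \<le> inverse (real (Suc M))" by (auto intro!: le_imp_inverse_le)
      moreover have "1 / real (Suc n) = inverse (real (Suc n))" by (simp add: divide_inverse)
      ultimately show "N (Y n) \<le> d + r" using YN[of n] M by linarith
    qed
  qed
  have key: "0 \<le> (\<Sum>i\<in>F. p i * (y i - p i))" if y: "y \<in> S" for y
  proof (rule ccontr)
    define a where "a = (\<Sum>i\<in>F. p i * (y i - p i))"
    define b where "b = (\<Sum>i\<in>F. (y i - p i)^2)"
    assume "\<not> 0 \<le> (\<Sum>i\<in>F. p i * (y i - p i))"
    then have a: "a < 0" unfolding a_def by simp
    have b: "0 \<le> b" unfolding b_def by (auto intro: sum_nonneg)
    define t where "t = min 1 (- a / (b + 1))"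
    have t0: "0 < t" "t \<le> 1" unfolding t_def using a b by (auto simp: divide_neg_pos)
    have tb: "t * b \<le> - a / (b + 1) * b" unfolding t_def using b by (intro mult_right_mono) auto
    have "- a / (b + 1) * b \<le> - a" using a b by (simp add: field_simps)
    then have ineq: "2 * a + t * b < 0" using tb a by linarith
    have "(\<lambda>k. N (\<lambda>i. t * y i + (1 - t) * Y k i)) \<longlonglongrightarrow> N (\<lambda>i. t * y i + (1 - t) * p i)"
      unfolding N_def by (intro tendsto_sum tendsto_power tendsto_add tendsto_mult tendsto_const Yp)
    then have "d \<le> N (\<lambda>i. t * y i + (1 - t) * p i)"
      by (rule LIMSEQ_le_const) (use dlow cvx[OF y YS] t0 in auto)
    also have "N (\<lambda>i. t * y i + (1 - t) * p i) = (\<Sum>i\<in>F. (p i)^2 + 2 * t * (p i * (y i - p i)) + t^2 * (y i - p i)^2)"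
      unfolding N_def by (rule sum.cong) (simp_all add: power2_eq_square algebra_simps)
    also have "\<dots> = N p + 2 * t * a + t^2 * b"
      by (simp add: N_def a_def b_def sum.distrib sum_distrib_left)
    finally have "0 \<le> t * (2 * a + t * b)" using Np2 by (simp add: power2_eq_square algebra_simps)
    moreover have "t * (2 * a + t * b) < 0" using ineq t0 by (simp add: mult_pos_neg)
    ultimately show False by linarith
  qed
  show ?thesis
  proof (intro exI ballI)
    fix y assume y: "y \<in> S"
    have "(\<Sum>i\<in>F. p i * y i) = (\<Sum>i\<in>F. p i * (y i - p i)) + N p"
      by (simp add: N_def power2_eq_square sum.distrib[symmetric] algebra_simps)
    then show "0 < (\<Sum>i\<in>F. p i * y i)" using key[OF y] Np1 de epos by linarith
  qed
qed



definition Phi :: "('a msr \<times> 'a msr) \<Rightarrow> (('a \<Rightarrow> real) \<times> bool) \<Rightarrow> real" where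
  "Phi y i = (if snd i then fst y (fst i) else snd y (fst i))"

lemma cont_fst_app: "continuous_on UNIV (\<lambda>y::('b \<Rightarrow> real) \<times> ('c \<Rightarrow> real). fst y f)"
  by (rule continuous_on_compose2[of UNIV "\<lambda>g. g f" UNIV fst]) (auto intro: continuous_on_fst continuous_on_id)
lemma cont_snd_app: "continuous_on UNIV (\<lambda>y::('b \<Rightarrow> real) \<times> ('c \<Rightarrow> real). snd y f)"
  by (rule continuous_on_compose2[of UNIV "\<lambda>g. g f" UNIV snd]) (auto intro: continuous_on_snd continuous_on_id)

lemma Phi_cont: "continuous_on UNIV (\<lambda>y. Phi y i)"
  unfolding Phi_def by (cases "snd i") (simp_all add: cont_fst_app cont_snd_app)

lemma open_box: "finite F \<Longrightarrow> open {y. \<forall>i\<in>F. \<bar>Phi y i - Phi x i\<bar> < e}"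
proof -
  assume fin: "finite F"
  have eq: "{y. \<forall>i\<in>F. \<bar>Phi y i - Phi x i\<bar> < e} = (\<Inter>i\<in>F. {y. \<bar>Phi y i - Phi x i\<bar> < e})" by auto
  show ?thesis unfolding eq
    by (intro open_INT fin ballI open_Collect_less continuous_intros Phi_cont)
qed

lemma fun_nbhd:
  fixes A :: "('b \<Rightarrow> real) set"
  assumes "open A" "g \<in> A"
  shows "\<exists>F e. finite F \<and> 0 < e \<and> {h. \<forall>i\<in>F. \<bar>h i - g i\<bar> < e} \<subseteq> A"
proof -
  have "openin (product_topology (\<lambda>i. euclidean) UNIV) A" using assms(1) by (simp add: open_fun_def)
  then obtain U where fin0: "finite {i \<in> UNIV. U i \<noteq> topspace euclidean}" and op0: "\<forall>i\<in>UNIV. openin euclidean (U i)"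
    and gU: "g \<in> Pi\<^sub>E UNIV U" and UA: "Pi\<^sub>E UNIV U \<subseteq> A"
  proof -
    from \<open>openin (product_topology (\<lambda>i. euclidean) UNIV) A\<close> have "\<forall>x\<in>A. \<exists>U. finite {i \<in> UNIV. U i \<noteq> topspace euclidean} \<and>
                 (\<forall>i \<in> UNIV. openin euclidean (U i)) \<and> x \<in> Pi\<^sub>E UNIV U \<and> Pi\<^sub>E UNIV U \<subseteq> A"
      by (simp only: openin_product_topology_alt)
    then have "\<exists>U. finite {i \<in> UNIV. U i \<noteq> topspace euclidean} \<and>
                 (\<forall>i \<in> UNIV. openin euclidean (U i)) \<and> g \<in> Pi\<^sub>E UNIV U \<and> Pi\<^sub>E UNIV U \<subseteq> A"
      using assms(2) by (rule bspec)
    then show ?thesis using that by blast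
  qed
  have fin: "finite {i. U i \<noteq> UNIV}" using fin0 by simp
  have op: "\<And>i. open (U i)" using op0 open_openin by blast
  have gi: "g i \<in> U i" for i using gU by (auto simp: PiE_iff)
  have "\<forall>i. \<exists>r>0. ball (g i) r \<subseteq> U i"
  proof
    fix i show "\<exists>r>0. ball (g i) r \<subseteq> U i" using op[of i] gi[of i] open_contains_ball by blast
  qed
  then obtain r where r: "\<And>i. 0 < r i" "\<And>i. ball (g i) (r i) \<subseteq> U i" by metis
  define I where "I = {i. U i \<noteq> UNIV}"
  define e where "e = Min (insert 1 (r ` I))"
  have "finite (insert 1 (r ` I))" using fin I_def by simp
  then have e0: "0 < e" unfolding e_def using r(1) by (subst Min_gr_iff) auto
  have eI: "e \<le> r i" if "i \<in> I" for i unfolding e_def using fin that I_def by (intro Min_le) auto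
  show ?thesis
  proof (intro exI conjI)
    show "{h. \<forall>i\<in>I. \<bar>h i - g i\<bar> < e} \<subseteq> A"
    proof
      fix h assume h: "h \<in> {h. \<forall>i\<in>I. \<bar>h i - g i\<bar> < e}"
      have "h i \<in> U i" for i
      proof (cases "i \<in> I")
        case True
        then have "\<bar>h i - g i\<bar> < r i" using h eI[OF True] by auto
        then have "h i \<in> ball (g i) (r i)" by (simp add: dist_real_def abs_minus_commute)
        then show ?thesis using r(2) by blast
      next
        case False then show ?thesis unfolding I_def by auto
      qed
      then have "h \<in> Pi\<^sub>E UNIV U" by (simp add: PiE_UNIV_domain)
      then show "h \<in> A" using UA by blast
    qed
  next
    show "finite I" using fin I_def by simp
  next
    show "0 < e" by (rule e0)
  qed
qed

lemma box_nbhd: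
  fixes x :: "'a msr \<times> 'a msr"
  assumes "open U" "x \<in> U"
  shows "\<exists>F e. finite F \<and> 0 < e \<and> {y. \<forall>i\<in>F. \<bar>Phi y i - Phi x i\<bar> < e} \<subseteq> U"
proof -
  obtain A B where AB: "open A" "open B" "x \<in> A \<times> B" "A \<times> B \<subseteq> U"
    by (rule open_prod_elim[OF assms]) blast
  have fx: "fst x \<in> A" "snd x \<in> B" using AB(3) by (auto simp: mem_Times_iff)
  obtain F1 e1 where 1: "finite F1" "0 < e1" "{h. \<forall>i\<in>F1. \<bar>h i - fst x i\<bar> < e1} \<subseteq> A"
    using fun_nbhd[OF AB(1) fx(1)] by blast
  obtain F2 e2 where 2: "finite F2" "0 < e2" "{h. \<forall>i\<in>F2. \<bar>h i - snd x i\<bar> < e2} \<subseteq> B"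
    using fun_nbhd[OF AB(2) fx(2)] by blast
  show ?thesis
  proof (intro exI conjI)
    let ?F = "(\<lambda>f. (f, True)) ` F1 \<union> (\<lambda>f. (f, False)) ` F2"
    show "finite ?F" using 1 2 by simp
    show "0 < min e1 e2" using 1 2 by simp
    show "{y. \<forall>i\<in>?F. \<bar>Phi y i - Phi x i\<bar> < min e1 e2} \<subseteq> U"
    proof
      fix y assume y: "y \<in> {y. \<forall>i\<in>?F. \<bar>Phi y i - Phi x i\<bar> < min e1 e2}"
      have "\<bar>fst y f - fst x f\<bar> < e1" if "f \<in> F1" for f
      proof -
        have "(f, True) \<in> ?F" using that by blast
        then have "\<bar>Phi y (f, True) - Phi x (f, True)\<bar> < min e1 e2" using y by blast
        then show ?thesis by (simp add: Phi_def)
      qed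
      then have "fst y \<in> A" using 1(3) by blast
      moreover have "\<bar>snd y f - snd x f\<bar> < e2" if "f \<in> F2" for f
      proof -
        have "(f, False) \<in> ?F" using that by blast
        then have "\<bar>Phi y (f, False) - Phi x (f, False)\<bar> < min e1 e2" using y by blast
        then show ?thesis by (simp add: Phi_def)
      qed
      then have "snd y \<in> B" using 2(3) by blast
      ultimately show "y \<in> U" using AB(4) by (cases y) auto
    qed
  qed
qed

lemma Phi_comb: "Phi (msr_add (msr_scale t a) (msr_scale u b)) i = t * Phi a i + u * Phi b i"
  unfolding Phi_def msr_add_def msr_scale_def by simp

lemma Phi_scale: "Phi (msr_scale t a) i = t * Phi a i"
  unfolding Phi_def msr_scale_def by simp

lemma Phi_zero: "Phi (msr_zero, msr_zero) i = 0"
  unfolding Phi_def msr_zero_def by simp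



lemma Sep:
  fixes P :: "('a::topological_space msr \<times> 'a msr) set" and K
  assumes PV: "P \<subseteq> Vsp" and cvxH: "msr_convex (hatP P)" and H0: "(msr_zero, msr_zero) \<in> hatP P"
    and KV: "K \<subseteq> Vsp" and Kne: "K \<noteq> {}" and cvxK: "msr_convex K"
    and fin: "finite F" and epos: "0 < e"
    and gap: "\<And>h k. h \<in> hatP P \<Longrightarrow> k \<in> K \<Longrightarrow> \<exists>i\<in>F. e \<le> \<bar>Phi h i - Phi k i\<bar>"
  shows "\<exists>\<eta> \<tau>. \<eta> \<in> Cfun \<and> \<tau> \<in> Cfun \<and> (\<forall>(dm, q)\<in>P. q \<tau> \<le> dm \<eta>) \<and> (\<forall>k\<in>K. fst k \<eta> < snd k \<tau>)"
proof -
  define S where "S = {(\<lambda>i. Phi h i - Phi k i) | h k. h \<in> hatP P \<and> k \<in> K}"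
  have Sne: "S \<noteq> {}" unfolding S_def using H0 Kne by blast
  have Scvx: "(\<lambda>i. t * x i + (1 - t) * y i) \<in> S" if xS: "x \<in> S" and yS: "y \<in> S" and tt: "0 \<le> t" "t \<le> 1" for x y t
  proof -
    obtain h1 k1 where 1: "x = (\<lambda>i. Phi h1 i - Phi k1 i)" "h1 \<in> hatP P" "k1 \<in> K" using xS unfolding S_def by blast
    obtain h2 k2 where 2: "y = (\<lambda>i. Phi h2 i - Phi k2 i)" "h2 \<in> hatP P" "k2 \<in> K" using yS unfolding S_def by blast
    let ?h = "msr_add (msr_scale t h1) (msr_scale (1 - t) h2)"
    let ?k = "msr_add (msr_scale t k1) (msr_scale (1 - t) k2)"
    have "?h \<in> hatP P" using cvxH 1 2 tt unfolding msr_convex_def by blast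
    moreover have "?k \<in> K" using cvxK 1 2 tt unfolding msr_convex_def by blast
    moreover have "(\<lambda>i. t * x i + (1 - t) * y i) = (\<lambda>i. Phi ?h i - Phi ?k i)"
      unfolding 1 2 Phi_comb by (simp add: algebra_simps)
    ultimately show ?thesis unfolding S_def by blast
  qed
  have Sgap: "e^2 \<le> (\<Sum>i\<in>F. (y i)^2)" if yS: "y \<in> S" for y
  proof -
    obtain h k where hk: "y = (\<lambda>i. Phi h i - Phi k i)" "h \<in> hatP P" "k \<in> K" using yS unfolding S_def by blast
    then obtain i where i: "i \<in> F" "e \<le> \<bar>y i\<bar>" using gap by blast
    have "e^2 \<le> \<bar>y i\<bar>^2" using i epos by (intro power_mono) auto
    also have "\<dots> = (y i)^2" by simp
    also have "\<dots> \<le> (\<Sum>i\<in>F. (y i)^2)" using fin i by (intro member_le_sum) auto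
    finally show ?thesis .
  qed
  obtain w where w: "\<And>y. y \<in> S \<Longrightarrow> 0 < (\<Sum>i\<in>F. w i * y i)"
  proof -
    have "0 < e^2" using epos by simp
    from CL[OF fin Sne Scvx this Sgap] show ?thesis using that by blast
  qed
  define L where "L y = (\<Sum>i\<in>F. w i * Phi y i)" for y
  have Lhk: "L k < L h" if "h \<in> hatP P" "k \<in> K" for h k
  proof -
    have "(\<lambda>i. Phi h i - Phi k i) \<in> S" unfolding S_def using that by blast
    then have "0 < (\<Sum>i\<in>F. w i * (Phi h i - Phi k i))" by (rule w)
    then show ?thesis unfolding L_def by (simp add: right_diff_distrib sum_subtractf)
  qed
  have Lscale: "L (msr_scale c y) = c * L y" for c y
    unfolding L_def Phi_scale by (simp add: sum_distrib_left algebra_simps)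
  have L0: "L (msr_zero, msr_zero) = 0" unfolding L_def Phi_zero by simp
  have LK: "L k < 0" if "k \<in> K" for k using Lhk[OF H0 that] L0 by simp
  obtain k0 where k0: "k0 \<in> K" using Kne by blast
  have LP: "0 \<le> L y" if y: "y \<in> P" for y
  proof (rule ccontr)
    assume "\<not> 0 \<le> L y"
    then have neg: "L y < 0" by simp
    define c where "c = L k0 / L y"
    have c0: "0 \<le> c" unfolding c_def using neg LK[OF k0] by (simp add: zero_le_divide_iff)
    have "msr_scale c y \<in> hatP P" using ConeP_hatP[OF PV] scale_in_Cone[OF y c0] by blast
    then have "L k0 < L (msr_scale c y)" using Lhk k0 by blast
    also have "L (msr_scale c y) = L k0" unfolding Lscale c_def using neg by simp
    finally show False by simp
  qed
  define G1 where "G1 = {i\<in>F. snd i \<and> fst i \<in> Cfun}"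
  define G2 where "G2 = {i\<in>F. \<not> snd i \<and> fst i \<in> Cfun}"
  define \<eta> where "\<eta> = (\<lambda>x. \<Sum>i\<in>G1. w i * fst i x)"
  define \<tau> where "\<tau> = (\<lambda>x. \<Sum>i\<in>G2. (- w i) * fst i x)"
  have fin1: "finite G1" and fin2: "finite G2" using fin unfolding G1_def G2_def by auto
  have \<eta>C: "\<eta> \<in> Cfun" unfolding \<eta>_def by (rule Cfun_sum[OF fin1]) (auto simp: G1_def)
  have \<tau>C: "\<tau> \<in> Cfun" unfolding \<tau>_def by (rule Cfun_sum[OF fin2]) (auto simp: G2_def)
  have Lrep: "L y = fst y \<eta> - snd y \<tau>" if y: "y \<in> Vsp" for y
  proof -
    have m1: "fst y \<in> Msr" and m2: "snd y \<in> Msr" using y unfolding Vsp_def Msr0_def by auto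
    have e1: "fst y \<eta> = (\<Sum>i\<in>G1. w i * fst y (fst i))"
      unfolding \<eta>_def by (rule Msr_sum[OF m1 fin1]) (auto simp: G1_def)
    have e2: "snd y \<tau> = (\<Sum>i\<in>G2. (- w i) * snd y (fst i))"
      unfolding \<tau>_def by (rule Msr_sum[OF m2 fin2]) (auto simp: G2_def)
    have "L y = (\<Sum>i\<in>G1 \<union> G2. w i * Phi y i)"
      unfolding L_def
    proof (rule sum.mono_neutral_right[OF fin])
      show "G1 \<union> G2 \<subseteq> F" unfolding G1_def G2_def by auto
      show "\<forall>i\<in>F - (G1 \<union> G2). w i * Phi y i = 0"
        using Msr_nc[OF m1] Msr_nc[OF m2] unfolding G1_def G2_def Phi_def by auto
    qed
    also have "\<dots> = (\<Sum>i\<in>G1. w i * Phi y i) + (\<Sum>i\<in>G2. w i * Phi y i)"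
      by (rule sum.union_disjoint[OF fin1 fin2]) (auto simp: G1_def G2_def)
    also have "(\<Sum>i\<in>G1. w i * Phi y i) = (\<Sum>i\<in>G1. w i * fst y (fst i))"
      by (rule sum.cong) (auto simp: G1_def Phi_def)
    also have "(\<Sum>i\<in>G2. w i * Phi y i) = (\<Sum>i\<in>G2. w i * snd y (fst i))"
      by (rule sum.cong) (auto simp: G2_def Phi_def)
    finally show ?thesis unfolding e1 e2 by (simp add: sum_negf)
  qed
  show ?thesis
  proof (intro exI conjI ballI)
    show "\<eta> \<in> Cfun" "\<tau> \<in> Cfun" by (fact \<eta>C, fact \<tau>C)
  next
    fix y assume y: "y \<in> P"
    have "y \<in> Vsp" using y PV by blast
    then have "0 \<le> fst y \<eta> - snd y \<tau>" using LP[OF y] Lrep[of y] by simp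
    then show "case y of (dm, q) \<Rightarrow> q \<tau> \<le> dm \<eta>" by (cases y) simp
  next
    fix k assume k: "k \<in> K"
    have "k \<in> Vsp" using k KV by blast
    then have "fst k \<eta> - snd k \<tau> < 0" using LK[OF k] Lrep[of k] by simp
    then show "fst k \<eta> < snd k \<tau>" by simp
  qed
qed



definition Prob :: "'a::topological_space msr set" where
  "Prob = {\<mu>. (\<forall>f. f \<notin> Cfun \<longrightarrow> \<mu> f = 0)
      \<and> (\<forall>f\<in>Cfun. \<forall>g\<in>Cfun. \<mu> (\<lambda>x. f x + g x) = \<mu> f + \<mu> g)
      \<and> (\<forall>f\<in>Cfun. \<forall>c. \<mu> (\<lambda>x. c * f x) = c * \<mu> f)
      \<and> (\<forall>f\<in>Cfun. \<bar>\<mu> f\<bar> \<le> sup_norm f)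
      \<and> (\<forall>f\<in>Cfun. (\<forall>x. 0 \<le> f x) \<longrightarrow> 0 \<le> \<mu> f)
      \<and> \<mu> (\<lambda>_. 1) = 1}"

lemma Prob_Msr_pos: "\<mu> \<in> Prob \<Longrightarrow> \<mu> \<in> Msr_pos"
  unfolding Prob_def Msr_pos_def Msr_def by (auto intro!: exI[of _ 1])

lemma Prob_Msr: "\<mu> \<in> Prob \<Longrightarrow> \<mu> \<in> Msr"
  using Prob_Msr_pos unfolding Msr_pos_def by blast

lemma dirac_Prob:
  assumes "compact (UNIV :: 'a::topological_space set)"
  shows "dirac (s::'a) \<in> Prob"
  unfolding Prob_def dirac_def using sup_norm_ge[OF assms] by (auto simp: Cfun_add Cfun_mult)

lemma Prob_convex:
  assumes "\<mu> \<in> Prob" "\<nu> \<in> Prob" "0 \<le> t" "t \<le> 1"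
  shows "(\<lambda>f. t * \<mu> f + (1 - t) * \<nu> f) \<in> Prob"
proof -
  have b: "\<bar>t * \<mu> f + (1 - t) * \<nu> f\<bar> \<le> sup_norm f" if "f \<in> Cfun" for f
  proof -
    have "\<bar>\<mu> f\<bar> \<le> sup_norm f" "\<bar>\<nu> f\<bar> \<le> sup_norm f" using assms(1,2) that unfolding Prob_def by auto
    then have "t * \<bar>\<mu> f\<bar> + (1 - t) * \<bar>\<nu> f\<bar> \<le> t * sup_norm f + (1 - t) * sup_norm f"
      using assms(3,4) by (intro add_mono mult_left_mono) auto
    moreover have "\<bar>t * \<mu> f + (1 - t) * \<nu> f\<bar> \<le> t * \<bar>\<mu> f\<bar> + (1 - t) * \<bar>\<nu> f\<bar>"
      using assms(3,4) by (metis abs_triangle_ineq abs_mult abs_of_nonneg diff_ge_0_iff_ge)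
    ultimately show ?thesis by (simp add: algebra_simps)
  qed
  have p: "0 \<le> t * \<mu> f + (1 - t) * \<nu> f" if "f \<in> Cfun" "\<forall>x. 0 \<le> f x" for f
    using assms that unfolding Prob_def by auto
  show ?thesis using assms b p unfolding Prob_def by (auto simp: algebra_simps)
qed

lemma Prob_closed: "closed Prob"
proof -
  have eq: "Prob = (\<Inter>f\<in>-Cfun. {\<mu>. \<mu> f = 0})
     \<inter> (\<Inter>f\<in>Cfun. \<Inter>g\<in>Cfun. {\<mu>. \<mu> (\<lambda>x. f x + g x) = \<mu> f + \<mu> g})
     \<inter> (\<Inter>f\<in>Cfun. \<Inter>c. {\<mu>. \<mu> (\<lambda>x. c * f x) = c * \<mu> f})
     \<inter> (\<Inter>f\<in>Cfun. {\<mu>. \<bar>\<mu> f\<bar> \<le> sup_norm f})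
     \<inter> (\<Inter>f\<in>{f\<in>Cfun. \<forall>x. 0 \<le> f x}. {\<mu>. 0 \<le> \<mu> f})
     \<inter> {\<mu>. \<mu> (\<lambda>_. 1) = 1}"
    unfolding Prob_def by auto
  show ?thesis unfolding eq
    by (intro closed_Int closed_INT ballI closed_Collect_eq closed_Collect_le continuous_intros
        continuous_on_product_coordinates)
qed

lemma Prob_compact: "compact (Prob :: 'a::topological_space msr set)"
proof -
  define B where "B = Pi\<^sub>E UNIV (\<lambda>f::'a \<Rightarrow> real. {- \<bar>sup_norm f\<bar> .. \<bar>sup_norm f\<bar>})"
  have "compactin (product_topology (\<lambda>i. euclidean) UNIV) B"
    unfolding B_def by (simp add: compactin_PiE)
  then have cB: "compact B" by (simp add: euclidean_product_topology)
  have "Prob \<subseteq> B"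
  proof
    fix \<mu> :: "'a msr" assume m: "\<mu> \<in> Prob"
    have "\<mu> f \<in> {- \<bar>sup_norm f\<bar> .. \<bar>sup_norm f\<bar>}" for f
    proof (cases "f \<in> Cfun")
      case True
      then have "\<bar>\<mu> f\<bar> \<le> sup_norm f" using m unfolding Prob_def by auto
      then show ?thesis by auto
    next
      case False
      then have "\<mu> f = 0" using m unfolding Prob_def by auto
      then show ?thesis by auto
    qed
    then show "\<mu> \<in> B" unfolding B_def by (simp add: PiE_UNIV_domain)
  qed
  then have "Prob = B \<inter> Prob" by blast
  then show ?thesis using compact_Int_closed[OF cB Prob_closed] by simp
qed



lemma gap1:
  fixes P :: "('a::topological_space msr \<times> 'a msr) set"
  assumes "x0 \<in> Vsp" "x0 \<notin> hatP P"
  shows "\<exists>F e. finite F \<and> 0 < e \<and> (\<forall>h\<in>hatP P. \<exists>i\<in>F. e \<le> \<bar>Phi h i - Phi x0 i\<bar>)"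
proof -
  have "x0 \<in> - closure (Cone P)" using assms unfolding hatP_def by blast
  then obtain F e where Fe: "finite F" "0 < e" "{y. \<forall>i\<in>F. \<bar>Phi y i - Phi x0 i\<bar> < e} \<subseteq> - closure (Cone P)"
    using box_nbhd[of "- closure (Cone P)" x0] by blast
  show ?thesis
  proof (intro exI conjI ballI)
    fix h assume h: "h \<in> hatP P"
    show "\<exists>i\<in>F. e \<le> \<bar>Phi h i - Phi x0 i\<bar>"
    proof (rule ccontr)
      assume "\<not> ?thesis"
      then have "h \<in> {y. \<forall>i\<in>F. \<bar>Phi y i - Phi x0 i\<bar> < e}" by (auto simp: not_le)
      then show False using Fe(3) h unfolding hatP_def by blast
    qed
  qed (use Fe in auto)
qed

lemma gap2:
  fixes P :: "('a::topological_space msr \<times> 'a msr) set"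
  assumes KP: "hatP P \<inter> {(msr_zero, \<nu>) | \<nu>. \<nu> \<in> Msr_pos} = {(msr_zero, msr_zero)}"
  shows "\<exists>F e. finite F \<and> 0 < e \<and> (\<forall>h\<in>hatP P. \<forall>k\<in>(\<lambda>\<mu>. (msr_zero, \<mu>)) ` Prob. \<exists>i\<in>F. e \<le> \<bar>Phi h i - Phi k i\<bar>)"
proof (rule ccontr)
  define K where "K = (\<lambda>\<mu>. (msr_zero :: 'a msr, \<mu>)) ` (Prob :: 'a msr set)"
  assume neg: "\<not> ?thesis"
  have NG: "\<exists>h\<in>hatP P. \<exists>k\<in>K. \<forall>i\<in>F. \<bar>Phi h i - Phi k i\<bar> < e" if "finite F" "0 < e" for F e
  proof -
    have "\<not> (\<forall>h\<in>hatP P. \<forall>k\<in>K. \<exists>i\<in>F. e \<le> \<bar>Phi h i - Phi k i\<bar>)"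
      using neg that unfolding K_def by blast
    then show ?thesis by (auto simp: not_le)
  qed
  define Z where "Z F e = {k\<in>K. \<exists>h\<in>hatP P. \<forall>i\<in>F. \<bar>Phi h i - Phi k i\<bar> < e}" for F e
  have Zmono: "Z F e \<subseteq> Z F' e'" if "F' \<subseteq> F" "e \<le> e'" for F F' e e'
  proof
    fix k assume "k \<in> Z F e"
    then obtain h where "k \<in> K" "h \<in> hatP P" "\<forall>i\<in>F. \<bar>Phi h i - Phi k i\<bar> < e" unfolding Z_def by blast
    then have "\<forall>i\<in>F'. \<bar>Phi h i - Phi k i\<bar> < e'" using that by force
    then show "k \<in> Z F' e'" unfolding Z_def using \<open>k \<in> K\<close> \<open>h \<in> hatP P\<close> by blast
  qed
  have Zne: "Z F e \<noteq> {}" if "finite F" "0 < e" for F e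
    using NG[OF that] unfolding Z_def by blast
  define FF where "FF = {closure (Z F e) | F e. finite F \<and> 0 < e}"
  have cK: "compact K" unfolding K_def
    by (rule compact_continuous_image[OF _ Prob_compact]) (intro continuous_intros)
  have claim: "\<exists>F e. finite F \<and> 0 < e \<and> Z F e \<subseteq> \<Inter>G" if "finite G" "G \<subseteq> FF" for G
    using that
  proof (induction G rule: finite_induct)
    case empty
    show ?case by (rule exI[of _ "{}"], rule exI[of _ 1]) auto
  next
    case (insert C G)
    then obtain F e where Fe: "finite F" "0 < e" "Z F e \<subseteq> \<Inter>G" by auto
    obtain F1 e1 where F1: "C = closure (Z F1 e1)" "finite F1" "0 < e1" using insert(4) unfolding FF_def by blast
    have "Z (F \<union> F1) (min e e1) \<subseteq> Z F e" by (rule Zmono) auto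
    moreover have "Z (F \<union> F1) (min e e1) \<subseteq> Z F1 e1" by (rule Zmono) auto
    ultimately have "Z (F \<union> F1) (min e e1) \<subseteq> \<Inter>(insert C G)"
      using Fe F1 closure_subset by fastforce
    then show ?case using Fe F1 by (intro exI[of _ "F \<union> F1"] exI[of _ "min e e1"]) auto
  qed
  have "K \<inter> \<Inter>FF \<noteq> {}"
  proof (rule compact_imp_fip[OF cK])
    show "closed T" if "T \<in> FF" for T using that unfolding FF_def by auto
    fix G assume G: "finite G" "G \<subseteq> FF"
    obtain F e where Fe: "finite F" "0 < e" "Z F e \<subseteq> \<Inter>G" using claim[OF G] by blast
    obtain z where z: "z \<in> Z F e" using Zne[OF Fe(1,2)] by blast
    have "z \<in> K" using z unfolding Z_def by blast
    moreover have "z \<in> \<Inter>G" using z Fe(3) by blast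
    ultimately show "K \<inter> \<Inter>G \<noteq> {}" by blast
  qed
  then obtain k0 where k0K: "k0 \<in> K" and k0F: "k0 \<in> \<Inter>FF" by blast
  have k0C: "k0 \<in> closure (Cone P)"
  proof (rule ccontr)
    assume "k0 \<notin> closure (Cone P)"
    then obtain F e where Fe: "finite F" "0 < e" "{y. \<forall>i\<in>F. \<bar>Phi y i - Phi k0 i\<bar> < e} \<subseteq> - closure (Cone P)"
      using box_nbhd[of "- closure (Cone P)" k0] by blast
    have "closure (Z F (e/3)) \<in> FF" unfolding FF_def using Fe by (intro CollectI exI[of _ F] exI[of _ "e/3"]) auto
    then have "k0 \<in> closure (Z F (e/3))" using k0F by blast
    moreover have "k0 \<in> {y. \<forall>i\<in>F. \<bar>Phi y i - Phi k0 i\<bar> < e/3}" using Fe by simp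
    ultimately have "{y. \<forall>i\<in>F. \<bar>Phi y i - Phi k0 i\<bar> < e/3} \<inter> closure (Z F (e/3)) \<noteq> {}" by blast
    then have "{y. \<forall>i\<in>F. \<bar>Phi y i - Phi k0 i\<bar> < e/3} \<inter> Z F (e/3) \<noteq> {}"
      using open_Int_closure_eq_empty[OF open_box[OF Fe(1)]] by blast
    then obtain k h where k: "\<forall>i\<in>F. \<bar>Phi k i - Phi k0 i\<bar> < e/3" and h: "h \<in> hatP P"
      and hk: "\<forall>i\<in>F. \<bar>Phi h i - Phi k i\<bar> < e/3" unfolding Z_def by blast
    have "h \<in> closure (Cone P)" using h unfolding hatP_def by blast
    moreover have "h \<in> {y. \<forall>i\<in>F. \<bar>Phi y i - Phi h i\<bar> < e/3}" using Fe by simp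
    ultimately have "{y. \<forall>i\<in>F. \<bar>Phi y i - Phi h i\<bar> < e/3} \<inter> closure (Cone P) \<noteq> {}" by blast
    then have "{y. \<forall>i\<in>F. \<bar>Phi y i - Phi h i\<bar> < e/3} \<inter> Cone P \<noteq> {}"
      using open_Int_closure_eq_empty[OF open_box[OF Fe(1)]] by blast
    then obtain y where y: "y \<in> Cone P" and yh: "\<forall>i\<in>F. \<bar>Phi y i - Phi h i\<bar> < e/3" by blast
    have "\<forall>i\<in>F. \<bar>Phi y i - Phi k0 i\<bar> < e"
    proof
      fix i assume i: "i \<in> F"
      show "\<bar>Phi y i - Phi k0 i\<bar> < e" using k[rule_format, OF i] hk[rule_format, OF i] yh[rule_format, OF i] by linarith
    qed
    then have "y \<in> - closure (Cone P)" using Fe(3) by blast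
    then show False using y closure_subset by blast
  qed
  obtain \<nu> where \<nu>: "\<nu> \<in> Prob" "k0 = (msr_zero, \<nu>)" using k0K unfolding K_def by blast
  have "k0 \<in> Vsp" unfolding Vsp_def using \<nu> zero_Msr0 Prob_Msr by auto
  then have "k0 \<in> hatP P" using k0C unfolding hatP_def by blast
  moreover have "k0 \<in> {(msr_zero, \<nu>) | \<nu>. \<nu> \<in> Msr_pos}" using \<nu> Prob_Msr_pos by blast
  ultimately have "k0 = (msr_zero, msr_zero)" using KP by blast
  then have "\<nu> = msr_zero" using \<nu> by simp
  moreover have "\<nu> (\<lambda>_. 1) = 1" using \<nu> unfolding Prob_def by blast
  ultimately show False unfolding msr_zero_def by simp
qed



lemma KP_H0: "kelvin_planck P \<Longrightarrow> (msr_zero, msr_zero) \<in> hatP P"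
  unfolding kelvin_planck_def by blast

lemma self_comb: "msr_add (msr_scale t p) (msr_scale (1 - t) p) = p"
  unfolding msr_add_def msr_scale_def by (cases p) (auto simp: algebra_simps)

lemma dirac_C: "g \<in> Cfun \<Longrightarrow> dirac s g = g s"
  unfolding dirac_def by simp

lemma hot_imp:
  fixes P :: "('a::topological_space msr \<times> 'a msr) set"
  assumes x: "(msr_zero, (\<lambda>f. dirac s f - dirac s' f)) \<in> hatP P" and cd: "CD_pair P \<eta> T"
  shows "1 / T s \<le> 1 / T s'"
proof -
  define C where "C = {y :: 'a msr \<times> 'a msr. snd y (\<lambda>x. 1 / T x) \<le> fst y \<eta>}"
  have cC: "closed C" unfolding C_def by (intro closed_Collect_le cont_snd_app cont_fst_app)
  have PC: "q (\<lambda>x. 1 / T x) \<le> dm \<eta>" if "(dm, q) \<in> P" for dm q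
    using cd that unfolding CD_pair_def by blast
  have "Cone P \<subseteq> C"
  proof
    fix y assume "y \<in> Cone P"
    then obtain c p where y: "y = msr_scale c p" "0 \<le> c" "p \<in> P" unfolding Cone_def by blast
    obtain dm q where p: "p = (dm, q)" by (cases p)
    have "q (\<lambda>x. 1 / T x) \<le> dm \<eta>" using PC y(3) p by blast
    then have "c * q (\<lambda>x. 1 / T x) \<le> c * dm \<eta>" using y(2) by (rule mult_left_mono)
    then show "y \<in> C" unfolding C_def y(1) p msr_scale_def by simp
  qed
  then have "closure (Cone P) \<subseteq> C" using cC by (rule closure_minimal)
  then have "(msr_zero, (\<lambda>f. dirac s f - dirac s' f)) \<in> C" using x unfolding hatP_def by blast
  moreover have "(\<lambda>x. 1 / T x) \<in> Cfun" using cd Cfun_inv unfolding CD_pair_def by blast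
  ultimately show ?thesis unfolding C_def msr_zero_def by (simp add: dirac_C)
qed

lemma dir2:
  fixes P :: "('a::topological_space msr \<times> 'a msr) set"
  assumes cU: "compact (UNIV :: 'a set)" and kp: "kelvin_planck P"
    and hyp: "\<And>T. CD_temp_scale P T \<Longrightarrow> T s = T s'"
  shows "(msr_zero, (\<lambda>f. dirac s f - dirac s' f)) \<in> hatP P"
proof (rule ccontr)
  define x0 where "x0 = ((msr_zero :: 'a msr), (\<lambda>f. dirac s f - dirac s' f))"
  assume "(msr_zero, (\<lambda>f. dirac s f - dirac s' f)) \<notin> hatP P"
  then have x0n: "x0 \<notin> hatP P" unfolding x0_def by simp
  have PV: "P \<subseteq> Vsp" and cvxH: "msr_convex (hatP P)"
    using kp unfolding kelvin_planck_def thermo_theory_def by auto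
  have H0: "(msr_zero, msr_zero) \<in> hatP P" using KP_H0[OF kp] .
  have KPeq: "hatP P \<inter> {(msr_zero, \<nu>) | \<nu>. \<nu> \<in> Msr_pos} = {(msr_zero, msr_zero)}"
    using kp unfolding kelvin_planck_def by blast
  have x0V: "x0 \<in> Vsp" unfolding x0_def Vsp_def using zero_Msr0 diff_dirac_Msr[OF cU] by auto
  obtain F e where Fe: "finite F" "0 < e" "\<forall>h\<in>hatP P. \<exists>i\<in>F. e \<le> \<bar>Phi h i - Phi x0 i\<bar>"
    using gap1[OF x0V x0n] by blast
  have cvx1: "msr_convex {x0}" unfolding msr_convex_def by (simp add: self_comb)
  obtain \<eta>0 \<tau>0 where S0: "\<eta>0 \<in> Cfun" "\<tau>0 \<in> Cfun" "\<forall>(dm, q)\<in>P. q \<tau>0 \<le> dm \<eta>0" "\<forall>k\<in>{x0}. fst k \<eta>0 < snd k \<tau>0"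
    using Sep[OF PV cvxH H0 _ _ cvx1 Fe(1,2)] x0V Fe(3) by blast
  have t0: "\<tau>0 s' < \<tau>0 s" using S0(2,4) unfolding x0_def msr_zero_def by (simp add: dirac_C)
  define K2 where "K2 = (\<lambda>\<mu>. (msr_zero :: 'a msr, \<mu>)) ` (Prob :: 'a msr set)"
  obtain F2 e2 where Fe2: "finite F2" "0 < e2" "\<forall>h\<in>hatP P. \<forall>k\<in>K2. \<exists>i\<in>F2. e2 \<le> \<bar>Phi h i - Phi k i\<bar>"
    using gap2[OF KPeq] unfolding K2_def by blast
  have K2V: "K2 \<subseteq> Vsp" unfolding K2_def Vsp_def using zero_Msr0 Prob_Msr by auto
  have K2ne: "K2 \<noteq> {}" unfolding K2_def using dirac_Prob[OF cU] by blast
  have cvx2: "msr_convex K2" unfolding msr_convex_def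
  proof (intro ballI allI impI)
    fix p q and t :: real assume p: "p \<in> K2" and q: "q \<in> K2" and t: "0 \<le> t \<and> t \<le> 1"
    obtain \<mu> \<nu> where mn: "\<mu> \<in> Prob" "\<nu> \<in> Prob" "p = (msr_zero, \<mu>)" "q = (msr_zero, \<nu>)"
      using p q unfolding K2_def by blast
    have "msr_add (msr_scale t p) (msr_scale (1 - t) q) = (msr_zero, (\<lambda>f. t * \<mu> f + (1 - t) * \<nu> f))"
      unfolding mn msr_add_def msr_scale_def msr_zero_def by simp
    moreover have "(\<lambda>f. t * \<mu> f + (1 - t) * \<nu> f) \<in> Prob" using Prob_convex mn t by blast
    ultimately show "msr_add (msr_scale t p) (msr_scale (1 - t) q) \<in> K2" unfolding K2_def by blast
  qed
  obtain \<eta>1 \<tau>1 where S1: "\<eta>1 \<in> Cfun" "\<tau>1 \<in> Cfun" "\<forall>(dm, q)\<in>P. q \<tau>1 \<le> dm \<eta>1" "\<forall>k\<in>K2. fst k \<eta>1 < snd k \<tau>1"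
    using Sep[OF PV cvxH H0 K2V K2ne cvx2 Fe2(1,2)] Fe2(3) by blast
  have t1pos: "0 < \<tau>1 x" for x
  proof -
    have "(msr_zero, dirac x) \<in> K2" unfolding K2_def using dirac_Prob[OF cU] by blast
    then have "fst (msr_zero :: 'a msr, dirac x) \<eta>1 < snd (msr_zero :: 'a msr, dirac x) \<tau>1" using S1(4) by blast
    then show ?thesis using S1(2) unfolding msr_zero_def by (simp add: dirac_C)
  qed
  have inv_inv: "(\<lambda>x. 1 / (1 / g x)) = g" for g :: "'a \<Rightarrow> real" by simp
  have "CD_pair P \<eta>1 (\<lambda>x. 1 / \<tau>1 x)"
    unfolding CD_pair_def inv_inv using S1(1,2,3) t1pos Cfun_inv[OF S1(2)] by auto
  then have "(\<lambda>x. 1 / \<tau>1 x) s = (\<lambda>x. 1 / \<tau>1 x) s'" using hyp unfolding CD_temp_scale_def by blast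
  then have t1eq: "\<tau>1 s = \<tau>1 s'" by simp
  have cont0: "continuous_on UNIV \<tau>0" and cont1: "continuous_on UNIV \<tau>1" using S0(2) S1(2) unfolding Cfun_def by auto
  obtain xm where xm: "\<And>x. \<tau>1 xm \<le> \<tau>1 x" using continuous_attains_inf[OF cU _ cont1] by blast
  obtain xn where xn: "\<And>x. \<tau>0 xn \<le> \<tau>0 x" using continuous_attains_inf[OF cU _ cont0] by blast
  define lam where "lam = (\<bar>\<tau>0 xn\<bar> + 1) / \<tau>1 xm"
  have lam0: "0 \<le> lam" unfolding lam_def using t1pos[of xm] by simp
  have lamm: "lam * \<tau>1 xm = \<bar>\<tau>0 xn\<bar> + 1" unfolding lam_def using t1pos[of xm] by simp
  define \<tau> where "\<tau> = (\<lambda>x. \<tau>0 x + lam * \<tau>1 x)"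
  define \<eta> where "\<eta> = (\<lambda>x. \<eta>0 x + lam * \<eta>1 x)"
  have tpos: "0 < \<tau> x" for x
  proof -
    have "lam * \<tau>1 xm \<le> lam * \<tau>1 x" using mult_left_mono[OF xm[of x] lam0] .
    then show ?thesis unfolding \<tau>_def using lamm xn[of x] by linarith
  qed
  have tC: "\<tau> \<in> Cfun" unfolding \<tau>_def by (intro Cfun_add Cfun_mult S0 S1)
  have eC: "\<eta> \<in> Cfun" unfolding \<eta>_def by (intro Cfun_add Cfun_mult S0 S1)
  have "CD_pair P \<eta> (\<lambda>x. 1 / \<tau> x)"
    unfolding CD_pair_def inv_inv
  proof (intro conjI allI ballI)
    show "\<eta> \<in> Cfun" by (fact eC)
    show "(\<lambda>x. 1 / \<tau> x) \<in> Cfun" using Cfun_inv[OF tC] tpos by blast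
    fix x show "0 < 1 / \<tau> x" using tpos[of x] by simp
  next
    fix y assume y: "y \<in> P"
    obtain dm q where yy: "y = (dm, q)" by (cases y)
    have m: "dm \<in> Msr" "q \<in> Msr" using y PV yy unfolding Vsp_def Msr0_def by auto
    have "q \<tau> = q \<tau>0 + lam * q \<tau>1"
      unfolding \<tau>_def using Msr_add[OF m(2) S0(2) Cfun_mult[OF S1(2)]] Msr_mult[OF m(2) S1(2)] by simp
    moreover have "dm \<eta> = dm \<eta>0 + lam * dm \<eta>1"
      unfolding \<eta>_def using Msr_add[OF m(1) S0(1) Cfun_mult[OF S1(1)]] Msr_mult[OF m(1) S1(1)] by simp
    moreover have "q \<tau>0 \<le> dm \<eta>0" using S0(3) y yy by blast
    moreover have "lam * q \<tau>1 \<le> lam * dm \<eta>1" using S1(3) y yy lam0 by (auto intro: mult_left_mono)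
    ultimately show "case y of (dm, q) \<Rightarrow> q \<tau> \<le> dm \<eta>" using yy by simp
  qed
  then have "(\<lambda>x. 1 / \<tau> x) s = (\<lambda>x. 1 / \<tau> x) s'" using hyp unfolding CD_temp_scale_def by blast
  then have "\<tau> s = \<tau> s'" by simp
  then have "\<tau>0 s = \<tau>0 s'" unfolding \<tau>_def using t1eq by simp
  then show False using t0 by simp
qed

theorem theorem3p1:
  fixes P :: "('a::t2_space msr \<times> 'a msr) set" and s s' :: 'a
  assumes "compact (UNIV :: 'a set)"
    and "kelvin_planck P"
  shows "same_hotness P s s' \<longleftrightarrow> (\<forall>T. CD_temp_scale P T \<longrightarrow> T s = T s')"
proof
  assume sh: "same_hotness P s s'"
  show "\<forall>T. CD_temp_scale P T \<longrightarrow> T s = T s'"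
  proof (intro allI impI)
    fix T assume "CD_temp_scale P T"
    then obtain \<eta> where cd: "CD_pair P \<eta> T" unfolding CD_temp_scale_def by blast
    have "1 / T s \<le> 1 / T s'" using hot_imp[OF _ cd] sh unfolding same_hotness_def by blast
    moreover have "1 / T s' \<le> 1 / T s" using hot_imp[OF _ cd] sh unfolding same_hotness_def by blast
    ultimately have "1 / T s = 1 / T s'" by linarith
    then show "T s = T s'" by simp
  qed
next
  assume h: "\<forall>T. CD_temp_scale P T \<longrightarrow> T s = T s'"
  show "same_hotness P s s'" unfolding same_hotness_def
  proof
    show "(msr_zero, \<lambda>f. dirac s f - dirac s' f) \<in> hatP P"
      by (rule dir2[OF assms]) (use h in blast)
    show "(msr_zero, \<lambda>f. dirac s' f - dirac s f) \<in> hatP P"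
      by (rule dir2[OF assms]) (use h in metis)
  qed
qed


end
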